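(* Let $v,u$ be integrable functions on $[0,\infty)$ and let $z_1,z_2,\gamma_1,\gamma_2$ be integrable functions on $[0,\infty)$ such that $$z_1(x)\le v(x)\le z_2(x)\quad\text{and}\quad \gamma_1(x)\le u(x)\le\gamma_2(x)\quad\text{for all }x\in[0,\infty).$$ Then for all $x>0$, $\alpha>0$, $\rho>0$ and $\beta,\eta,k\in\mathbb{R}$, writing $\mathcal{J}=\,{}^{\rho}\mathcal{J}^{\alpha,\beta}_{\eta,k}$ and $\Lambda=\Lambda^{\rho,\beta}_{x,k}(\alpha,\eta)$, $$\Big[\Lambda\,\mathcal{J}(vu)(x)-\mathcal{J}v(x)\,\mathcal{J}u(x)\Big]^2\le T(v,z_1,z_2)\,T(u,\gamma_1,\gamma_2),$$ where for functions $\varphi,\psi,\omega$, $$\begin{aligned}T(\varphi,\psi,\omega)={}&(\mathcal{J}\omega(x)-\mathcal{J}\varphi(x))(\mathcal{J}\varphi(x)-\mathcal{J}\psi(x)) +\Lambda\,\mathcal{J}(\varphi\psi)(x)-\mathcal{J}\varphi(x)\,\mathcal{J}\psi(x)\\ &+\Lambda\,\mathcal{J}(\varphi\omega)(x)-\mathcal{J}\varphi(x)\,\mathcal{J}\omega(x) -\Lambda\,\mathcal{J}(\psi\omega)(x)+\mathcal{J}\psi(x)\,\mathcal{J}\omega(x).\end{aligned}$$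
   Context: For a function $f$ on $[0,\infty)$, $x>0$, $\alpha>0$, $\rho>0$ and $\beta,\eta,k\in\mathbb{R}$, the generalized Katugampola fractional integral is $${}^{\rho}\mathcal{J}^{\alpha,\beta}_{\eta,k}f(x)=\frac{\rho^{1-\beta}x^{k}}{\Gamma(\alpha)}\int_0^x\frac{\tau^{\rho(\eta+1)-1}}{(x^\rho-\tau^\rho)^{1-\alpha}}f(\tau)\,d\tau,$$ defined whenever the integral exists; all such integrals appearing are assumed to exist. $\mathcal{J}(fg)(x)$ denotes the operator applied to the pointwise product $fg$. Also $$\Lambda^{\rho,\beta}_{x,k}(\alpha,\eta)=\frac{\Gamma(\eta+1)}{\Gamma(\eta+\alpha+1)}\rho^{-\beta}x^{k+\rho(\eta+\alpha)}.$$ *)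

theory Defs
  imports "HOL-Analysis.Analysis"
begin

definition kat_kernel :: "real \<Rightarrow> real \<Rightarrow> real \<Rightarrow> real \<Rightarrow> real \<Rightarrow> real" where
  "kat_kernel rho alpha eta x tau =
     tau powr (rho * (eta + 1) - 1) / (x powr rho - tau powr rho) powr (1 - alpha)"

definition kat_exists :: "real \<Rightarrow> real \<Rightarrow> real \<Rightarrow> (real \<Rightarrow> real) \<Rightarrow> real \<Rightarrow> bool" where
  "kat_exists rho alpha eta f x =
     set_integrable lborel {0..x} (\<lambda>tau. kat_kernel rho alpha eta x tau * f tau)"

definition kat_J :: "real \<Rightarrow> real \<Rightarrow> real \<Rightarrow> real \<Rightarrow> real \<Rightarrow> (real \<Rightarrow> real) \<Rightarrow> real \<Rightarrow> real" where
  "kat_J rho alpha beta eta k f x =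
     rho powr (1 - beta) * x powr k / Gamma alpha *
     (LINT tau:{0..x}|lborel. kat_kernel rho alpha eta x tau * f tau)"

definition kat_Lambda :: "real \<Rightarrow> real \<Rightarrow> real \<Rightarrow> real \<Rightarrow> real \<Rightarrow> real \<Rightarrow> real" where
  "kat_Lambda rho alpha beta eta k x =
     Gamma (eta + 1) / Gamma (eta + alpha + 1) * rho powr (- beta) * x powr (k + rho * (eta + alpha))"

definition kat_T :: "real \<Rightarrow> real \<Rightarrow> real \<Rightarrow> real \<Rightarrow> real \<Rightarrow> real \<Rightarrow>
    (real \<Rightarrow> real) \<Rightarrow> (real \<Rightarrow> real) \<Rightarrow> (real \<Rightarrow> real) \<Rightarrow> real" where
  "kat_T rho alpha beta eta k x \<phi> \<psi> \<omega> =
     (let J = (\<lambda>f. kat_J rho alpha beta eta k f x); L = kat_Lambda rho alpha beta eta k x in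
      (J \<omega> - J \<phi>) * (J \<phi> - J \<psi>)
      + L * J (\<lambda>t. \<phi> t * \<psi> t) - J \<phi> * J \<psi>
      + L * J (\<lambda>t. \<phi> t * \<omega> t) - J \<phi> * J \<omega>
      - L * J (\<lambda>t. \<psi> t * \<omega> t) + J \<psi> * J \<omega>)"

end

theory Submission imports Defs begin

lemma quad_disc:
  fixes a b c :: real
  assumes a: "a \<ge> 0" and q: "\<And>t. 0 \<le> a * t^2 + 2 * b * t + c"
  shows "b^2 \<le> a * c"
proof (cases "a > 0")
  case True
  have "0 \<le> a * (-b/a)^2 + 2 * b * (-b/a) + c" by (rule q)
  also have "\<dots> = c - b^2 / a" using True by (simp add: field_simps power2_eq_square)
  finally show ?thesis using True by (simp add: field_simps)
next
  case False
  with a have a0: "a = 0" by simp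
  show ?thesis
  proof (cases "b = 0")
    case False
    have "0 \<le> a * (-(c+1)/(2*b))^2 + 2 * b * (-(c+1)/(2*b)) + c" by (rule q)
    also have "\<dots> = -1" using False a0 by (simp add: field_simps)
    finally show ?thesis by simp
  qed (simp add: a0)
qed

lemma powr_ident:
  fixes x rho eta alpha tau :: real
  assumes x: "x > 0" and rho: "rho > 0" and t: "0 < tau" "tau < x"
  shows "((tau/x) powr rho) powr eta * (1 - (tau/x) powr rho) powr (alpha - 1) * (rho / x * (tau/x) powr (rho - 1))
     = (rho * x powr (-(rho*(eta+alpha)))) * kat_kernel rho alpha eta x tau"
proof -
  define r where "r = tau / x"
  have r: "0 < r" "r < 1" using t x by (auto simp: r_def field_simps)
  have tau: "tau = x * r" using x by (simp add: r_def)
  have rr: "r powr rho < 1" using powr_less_mono2[of rho r 1] r rho by simp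
  have d: "x powr rho - tau powr rho = x powr rho * (1 - r powr rho)"
    using x r by (simp add: tau powr_mult algebra_simps)
  have e1: "inverse ((x powr rho * (1 - r powr rho)) powr (1 - alpha))
        = x powr (rho*(alpha-1)) * (1 - r powr rho) powr (alpha - 1)"
  proof -
    have "inverse ((x powr rho * (1 - r powr rho)) powr (1 - alpha))
        = (x powr rho * (1 - r powr rho)) powr (alpha - 1)"
      by (simp add: powr_minus[symmetric])
    also have "\<dots> = (x powr rho) powr (alpha - 1) * (1 - r powr rho) powr (alpha - 1)"
      using rr by (simp add: powr_mult)
    finally show ?thesis by (simp add: powr_powr)
  qed
  have k: "kat_kernel rho alpha eta x tau = x powr (rho*(eta+1)-1) * r powr (rho*(eta+1)-1)
      * (x powr (rho*(alpha-1)) * (1 - r powr rho) powr (alpha - 1))"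
    unfolding kat_kernel_def d using x r rr e1
    by (simp add: tau powr_mult divide_inverse)
  have p1: "r powr (rho*(eta+1)-1) = (r powr rho) powr eta * r powr (rho - 1)"
    using r by (simp add: powr_powr flip: powr_add) (simp add: algebra_simps)
  have p2: "x powr (-(rho*(eta+alpha))) * (x powr (rho*(eta+1)-1) * x powr (rho*(alpha-1))) = 1 / x"
    using x by (simp add: powr_minus_divide flip: powr_add) (simp add: algebra_simps powr_diff)
  have "(rho * x powr (-(rho*(eta+alpha)))) * kat_kernel rho alpha eta x tau
     = rho * (x powr (-(rho*(eta+alpha))) * (x powr (rho*(eta+1)-1) * x powr (rho*(alpha-1))))
       * ((r powr rho) powr eta * r powr (rho - 1)) * (1 - r powr rho) powr (alpha - 1)"
    unfolding k p1 by (simp add: mult_ac)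
  also have "\<dots> = ((tau/x) powr rho) powr eta * (1 - (tau/x) powr rho) powr (alpha - 1) * (rho / x * (tau/x) powr (rho - 1))"
    unfolding p2 r_def by simp
  finally show ?thesis by simp
qed

lemma kernel_subst:
  fixes x rho eta alpha :: real
  assumes x: "x > 0" and rho: "rho > 0"
    and int: "set_integrable lborel {0..x} (\<lambda>tau. kat_kernel rho alpha eta x tau * 1)"
  shows "set_integrable lborel {0<..<1} (\<lambda>s. s powr eta * (1-s) powr (alpha-1))"
    and "(LBINT s=0..1. s powr eta * (1-s) powr (alpha-1))
         = rho * x powr (-(rho*(eta+alpha))) * (LINT tau:{0..x}|lborel. kat_kernel rho alpha eta x tau)"
proof -
  define f where "f = (\<lambda>s::real. s powr eta * (1-s) powr (alpha-1))"
  define g where "g = (\<lambda>tau::real. (tau/x) powr rho)"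
  define g' where "g' = (\<lambda>tau::real. rho / x * (tau/x) powr (rho - 1))"
  define C where "C = rho * x powr (-(rho*(eta+alpha)))"
  have fg: "f (g tau) * g' tau = C * kat_kernel rho alpha eta x tau" if "0 < tau" "tau < x" for tau
    using powr_ident[OF x rho that, of eta alpha] by (simp add: f_def g_def g'_def C_def)
  have g01: "0 < g tau \<and> g tau < 1" if "0 < tau" "tau < x" for tau
    using that x rho powr_less_mono2[of rho "tau/x" 1] by (simp add: g_def)
  have int2: "set_integrable lborel (einterval (ereal 0) (ereal x)) (\<lambda>tau. f (g tau) * g' tau)"
  proof -
    have "set_integrable lborel {0<..<x} (\<lambda>tau. kat_kernel rho alpha eta x tau)"
      using set_integrable_subset[OF int, of "{0<..<x}"] by (simp add: subset_iff)
    hence "set_integrable lborel {0<..<x} (\<lambda>tau. C * kat_kernel rho alpha eta x tau)"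
      by (rule set_integrable_mult_right)
    thus ?thesis
      by (rule set_integrable_cong[THEN iffD1, rotated -1]) (auto simp: fg)
  qed
  have deriv: "DERIV g tau :> g' tau" if "0 < tau" for tau
    unfolding g_def g'_def using that x
    by (auto intro!: derivative_eq_intros simp: field_simps powr_diff)
  have A: "((ereal \<circ> g \<circ> real_of_ereal) \<longlongrightarrow> ereal 0) (at_right (ereal 0))"
    unfolding ereal_tendsto_simps g_def
  proof (rule tendsto_zero_powrI[OF _ tendsto_const _ rho])
    show "((\<lambda>tau. tau / x) \<longlongrightarrow> 0) (at_right 0)"
      using x by (auto intro!: tendsto_eq_intros)
    show "\<forall>\<^sub>F tau in at_right 0. 0 \<le> tau / x"
      using x by (auto intro!: eventually_at_rightI[of 0 1])
  qed
  have B: "((ereal \<circ> g \<circ> real_of_ereal) \<longlongrightarrow> ereal 1) (at_left (ereal x))"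
    unfolding ereal_tendsto_simps g_def using x
    by (auto intro!: tendsto_eq_intros)
  note sub = interval_integral_substitution_nonneg[where a="ereal 0" and b="ereal x" and g=g and g'=g' and f=f
     and A="ereal 0" and B="ereal 1", OF _ _ _ _ _ _ A B int2]
  have p3: "isCont f (g t)" if "ereal 0 < ereal t" "ereal t < ereal x" for t
    using g01[of t] that unfolding f_def by (auto intro!: continuous_intros)
  have p4: "isCont g' t" if "ereal 0 < ereal t" "ereal t < ereal x" for t
    using that x unfolding g'_def by (auto intro!: continuous_intros)
  have p5: "0 \<le> f (g t)" for t unfolding f_def by simp
  have p6: "0 \<le> g' t" if "ereal 0 \<le> ereal t" "ereal t \<le> ereal x" for t
    using that x rho unfolding g'_def by auto
  have p2: "DERIV g t :> g' t" if "ereal 0 < ereal t" "ereal t < ereal x" for t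
    using that deriv by auto
  note sub = interval_integral_substitution_nonneg[where a="ereal 0" and b="ereal x" and g=g and g'=g' and f=f
     and A="ereal 0" and B="ereal 1", OF _ p2 p3 p4 p5 p6 A B int2]
  have s1: "set_integrable lborel {0<..<1} f" using sub(1) x by simp
  have s2: "(LBINT s=ereal 0..ereal 1. f s) = (LBINT t=ereal 0..ereal x. f (g t) * g' t)"
    using sub(2) x by simp
  show "set_integrable lborel {0<..<1} (\<lambda>s. s powr eta * (1-s) powr (alpha-1))"
    using s1 unfolding f_def .
  show "(LBINT s=0..1. s powr eta * (1-s) powr (alpha-1))
         = rho * x powr (-(rho*(eta+alpha))) * (LINT tau:{0..x}|lborel. kat_kernel rho alpha eta x tau)"
  proof -
    have "(LBINT s=0..1. s powr eta * (1-s) powr (alpha-1)) = (LBINT t=ereal 0..ereal x. f (g t) * g' t)"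
      using s2 by (simp add: f_def zero_ereal_def one_ereal_def)
    also have "\<dots> = (LBINT t=ereal 0..ereal x. C * kat_kernel rho alpha eta x t)"
      using x by (intro interval_integral_cong) (auto simp: fg min_def max_def)
    also have "\<dots> = (LBINT t:{0..x}. C * kat_kernel rho alpha eta x t)"
      using x by (intro interval_integral_Icc) simp
    also have "\<dots> = C * (LINT tau:{0..x}|lborel. kat_kernel rho alpha eta x tau)"
      by (rule set_integral_mult_right)
    finally show ?thesis by (simp add: C_def)
  qed
qed

lemma inv_not_integrable: "\<not> set_integrable lborel {0<..(1/2::real)} (\<lambda>s. 1 / s)"
proof
  assume a: "set_integrable lborel {0<..(1/2::real)} (\<lambda>s. 1 / s)"
  have hk: "(\<lambda>s::real. 1 / s) integrable_on {0<..1/2}"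
    using set_borel_integral_eq_integral(1)[OF a] .
  define I where "I = integral {0<..1/2::real} (\<lambda>s. 1 / s)"
  define e where "e = min (1/4) (exp (-(\<bar>I\<bar>+1)))"
  have e: "0 < e" "e < 1/2" "e \<le> exp (-(\<bar>I\<bar>+1))" by (auto simp: e_def)
  have "ln e \<le> ln (exp (-(\<bar>I\<bar>+1)))" using e by (subst ln_le_cancel_iff) auto
  hence lne: "ln e \<le> -(\<bar>I\<bar>+1)" by simp
  have ftc: "((\<lambda>s::real. 1 / s) has_integral (ln (1/2) - ln e)) {e..1/2}"
  proof (rule fundamental_theorem_of_calculus)
    show "e \<le> 1/2" using e by simp
    fix t :: real assume "t \<in> {e..1/2}"
    hence "t > 0" using e by auto
    thus "(ln has_vector_derivative 1 / t) (at t within {e..1/2})"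
      by (auto intro!: derivative_eq_intros simp flip: has_real_derivative_iff_has_vector_derivative)
  qed
  have "integral {e..1/2} (\<lambda>s::real. 1 / s) \<le> I"
    unfolding I_def
  proof (rule integral_subset_le)
    show "{e..1/2} \<subseteq> {0<..1/2::real}" using e by auto
    show "(\<lambda>s::real. 1 / s) integrable_on {e..1/2}" using has_integral_integrable[OF ftc] .
    show "(\<lambda>s::real. 1 / s) integrable_on {0<..1/2}" by (rule hk)
    show "\<forall>s\<in>{0<..1/2::real}. 0 \<le> 1 / s" by simp
  qed
  hence "ln (1/2) - ln e \<le> I" using ftc by (simp add: integral_unique)
  moreover have "ln (1/2::real) > -1"
  proof -
    have "ln (1/2::real) = - ln 2" by (simp add: ln_div)
    moreover have "ln (2::real) < 1" using ln_2_less_1 .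
    ultimately show ?thesis by simp
  qed
  ultimately show False using lne by linarith
qed

lemma eta_gt:
  fixes eta alpha :: real
  assumes int: "set_integrable lborel {0<..<1} (\<lambda>s. s powr eta * (1-s) powr (alpha-1))"
  shows "eta > -1"
proof (rule ccontr)
  assume "\<not> eta > -1"
  hence eta: "eta \<le> -1" by simp
  define m where "m = min 1 ((1/2::real) powr (alpha-1))"
  have m: "m > 0" by (simp add: m_def)
  have bnd: "1 / s \<le> (1/m) * (s powr eta * (1-s) powr (alpha-1))" if s: "0 < s" "s \<le> 1/2" for s :: real
  proof -
    have "m \<le> (1-s) powr (alpha-1)"
    proof (cases "alpha \<ge> 1")
      case True
      have "(1/2::real) powr (alpha-1) \<le> (1-s) powr (alpha-1)"
        using True s by (intro powr_mono2) auto
      thus ?thesis unfolding m_def by linarith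
    next
      case False
      have "(1::real) powr (alpha-1) \<le> (1-s) powr (alpha-1)"
        using False s by (intro powr_mono2') auto
      thus ?thesis unfolding m_def by simp
    qed
    moreover have "1 / s \<le> s powr eta"
    proof -
      have "s powr (-1) \<le> s powr eta" using eta s by (intro powr_mono') auto
      thus ?thesis using s by (simp add: powr_neg_one)
    qed
    moreover have "0 \<le> 1 / s" using s by simp
    ultimately have "1 / s * m \<le> s powr eta * (1-s) powr (alpha-1)"
      using m by (intro mult_mono) auto
    thus ?thesis using m by (simp add: field_simps)
  qed
  have i2: "set_integrable lborel {0<..1/2} (\<lambda>s. (1/m) * (s powr eta * (1-s) powr (alpha-1)))"
    by (rule set_integrable_mult_right, rule set_integrable_subset[OF int]) auto
  have "set_integrable lborel {0<..(1/2::real)} (\<lambda>s. 1 / s)"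
    unfolding set_integrable_def
  proof (rule Bochner_Integration.integrable_bound[OF i2[unfolded set_integrable_def]])
    show "(\<lambda>s::real. indicat_real {0<..1/2} s *\<^sub>R (1 / s)) \<in> borel_measurable lborel"
      by measurable
    show "AE s in lborel. norm (indicat_real {0<..1/2} s *\<^sub>R (1 / s))
        \<le> norm (indicat_real {0<..1/2} s *\<^sub>R ((1/m) * (s powr eta * (1-s) powr (alpha-1))))"
    proof (rule AE_I2)
      fix s :: real
      show "norm (indicat_real {0<..1/2} s *\<^sub>R (1 / s))
        \<le> norm (indicat_real {0<..1/2} s *\<^sub>R ((1/m) * (s powr eta * (1-s) powr (alpha-1))))"
        using bnd[of s] m by (auto simp: indicator_def)
    qed
  qed
  thus False using inv_not_integrable by blast
qed

lemma kernel_int_value: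
  fixes x rho eta alpha :: real
  assumes x: "x > 0" and rho: "rho > 0" and alpha: "alpha > 0"
    and int: "set_integrable lborel {0..x} (\<lambda>tau. kat_kernel rho alpha eta x tau * 1)"
  shows "eta > -1"
    and "(LINT tau:{0..x}|lborel. kat_kernel rho alpha eta x tau)
         = x powr (rho*(eta+alpha)) / rho * Beta (eta+1) alpha"
proof -
  note ks = kernel_subst[OF x rho int]
  show eta: "eta > -1" by (rule eta_gt[OF ks(1)])
  have ib: "set_integrable lborel {0..1} (\<lambda>s. s powr (eta + 1 - 1) * (1 - s) powr (alpha - 1))"
    using integrable_Beta[of "eta+1" alpha] eta alpha by simp
  have "(LBINT s=0..1. s powr eta * (1-s) powr (alpha-1))
      = (LBINT s=ereal 0..ereal 1. s powr (eta + 1 - 1) * (1-s) powr (alpha-1))"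
    by (simp add: zero_ereal_def one_ereal_def)
  also have "\<dots> = (LBINT s:{0..1}. s powr (eta + 1 - 1) * (1-s) powr (alpha-1))"
    by (rule interval_integral_Icc) simp
  also have "\<dots> = integral {0..1} (\<lambda>s. s powr (eta + 1 - 1) * (1-s) powr (alpha-1))"
    by (rule set_borel_integral_eq_integral(2)[OF ib])
  also have "\<dots> = Beta (eta+1) alpha"
    using has_integral_Beta_real[of "eta+1" alpha] eta alpha by (simp add: integral_unique)
  finally have "Beta (eta+1) alpha = rho * x powr (-(rho*(eta+alpha))) * (LINT tau:{0..x}|lborel. kat_kernel rho alpha eta x tau)"
    using ks(2) by simp
  thus "(LINT tau:{0..x}|lborel. kat_kernel rho alpha eta x tau)
         = x powr (rho*(eta+alpha)) / rho * Beta (eta+1) alpha"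
  proof -
    let ?I = "LINT tau:{0..x}|lborel. kat_kernel rho alpha eta x tau"
    let ?a = "rho*(eta+alpha)"
    assume h: "Beta (eta+1) alpha = rho * x powr (-?a) * ?I"
    have p: "x powr ?a * x powr (-?a) = 1" using x by (simp flip: powr_add)
    have "x powr ?a / rho * Beta (eta+1) alpha = (x powr ?a * x powr (-?a)) * (rho / rho) * ?I"
      unfolding h by (simp add: field_simps)
    thus ?thesis using p rho by simp
  qed
qed

definition gT :: "real \<Rightarrow> (('a \<Rightarrow> real) \<Rightarrow> real) \<Rightarrow> ('a \<Rightarrow> real) \<Rightarrow> ('a \<Rightarrow> real) \<Rightarrow> ('a \<Rightarrow> real) \<Rightarrow> real" where
  "gT L J \<phi> \<psi> \<omega> =
      (J \<omega> - J \<phi>) * (J \<phi> - J \<psi>)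
      + L * J (\<lambda>t. \<phi> t * \<psi> t) - J \<phi> * J \<psi>
      + L * J (\<lambda>t. \<phi> t * \<omega> t) - J \<phi> * J \<omega>
      - L * J (\<lambda>t. \<psi> t * \<omega> t) + J \<psi> * J \<omega>"

lemma var_ineq:
  fixes M :: "'a measure" and w h :: "'a \<Rightarrow> real"
  assumes w0: "\<And>t. w t \<ge> 0" and iw: "integrable M w" and ih: "integrable M (\<lambda>t. w t * h t)"
    and ihh: "integrable M (\<lambda>t. w t * (h t * h t))"
  shows "(\<integral>t. w t * h t \<partial>M)^2 \<le> (\<integral>t. w t * 1 \<partial>M) * (\<integral>t. w t * (h t * h t) \<partial>M)"
proof -
  let ?A = "\<integral>t. w t * 1 \<partial>M" and ?B = "\<integral>t. w t * h t \<partial>M" and ?D = "\<integral>t. w t * (h t * h t) \<partial>M"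
  have A0: "?A \<ge> 0" using w0 by (intro integral_nonneg_AE) auto
  have q: "0 \<le> ?A * c^2 + 2 * (- ?B) * c + ?D" for c
  proof -
    have n: "0 \<le> (\<integral>t. w t * (h t - c)^2 \<partial>M)" using w0 by (intro integral_nonneg_AE) auto
    have e: "(\<lambda>t. w t * (h t - c)^2) = (\<lambda>t. w t * (h t * h t) - 2 * c * (w t * h t) + c^2 * w t)"
      by (auto simp: power2_eq_square algebra_simps)
    have "(\<integral>t. w t * (h t * h t) - 2 * c * (w t * h t) + c^2 * w t \<partial>M)
        = ?D - 2 * c * ?B + c^2 * (\<integral>t. w t \<partial>M)"
      using ihh ih iw by (simp add: integral_add integral_diff)
    thus ?thesis using n unfolding e by (simp add: algebra_simps)
  qed
  have "(- ?B)^2 \<le> ?A * ?D" by (rule quad_disc[OF A0 q])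
  thus ?thesis by simp
qed

lemma T_ge:
  fixes M :: "'a measure" and w p q r :: "'a \<Rightarrow> real" and P :: "('a \<Rightarrow> real) \<Rightarrow> real"
  assumes w0: "\<And>t. w t \<ge> 0" and iw: "integrable M w"
    and ip: "integrable M (\<lambda>t. w t * p t)" and iq: "integrable M (\<lambda>t. w t * q t)"
    and ir: "integrable M (\<lambda>t. w t * r t)"
    and ipq: "integrable M (\<lambda>t. w t * (p t * q t))" and ipr: "integrable M (\<lambda>t. w t * (p t * r t))"
    and iqr: "integrable M (\<lambda>t. w t * (q t * r t))"
    and mp: "(\<lambda>t. w t * (p t * p t)) \<in> borel_measurable M"
    and b: "\<And>t. w t \<noteq> 0 \<Longrightarrow> q t \<le> p t \<and> p t \<le> r t"
    and Pdef: "P = (\<lambda>f. \<integral>t. w t * f t \<partial>M)"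
  shows "integrable M (\<lambda>t. w t * (p t * p t))"
    and "P (\<lambda>t. 1) * P (\<lambda>t. p t * p t) - (P p)^2 \<le> gT (P (\<lambda>t. 1)) P p q r"
proof -
  have pt: "0 \<le> w t * ((r t - p t) * (p t - q t))" for t
    using w0[of t] b[of t] by (cases "w t = 0") (auto intro!: mult_nonneg_nonneg)
  have eq: "w t * (p t * q t) + w t * (p t * r t) - w t * (q t * r t)
      = w t * (p t * p t) + w t * ((r t - p t) * (p t - q t))" for t
    by (simp add: algebra_simps)
  have ib: "integrable M (\<lambda>t. w t * (p t * q t) + w t * (p t * r t) - w t * (q t * r t))"
    using ipq ipr iqr by simp
  show ipp: "integrable M (\<lambda>t. w t * (p t * p t))"
  proof (rule Bochner_Integration.integrable_bound[OF ib mp], rule AE_I2)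
    fix t
    have "0 \<le> w t * (p t * p t)" using w0[of t] by simp
    thus "norm (w t * (p t * p t)) \<le> norm (w t * (p t * q t) + w t * (p t * r t) - w t * (q t * r t))"
      unfolding eq using pt[of t] by simp
  qed
  have ie: "integrable M (\<lambda>t. w t * ((r t - p t) * (p t - q t)))"
  proof -
    have "integrable M (\<lambda>t. (w t * (p t * q t) + w t * (p t * r t) - w t * (q t * r t)) - w t * (p t * p t))"
      using ib ipp by simp
    also have "(\<lambda>t. (w t * (p t * q t) + w t * (p t * r t) - w t * (q t * r t)) - w t * (p t * p t))
        = (\<lambda>t. w t * ((r t - p t) * (p t - q t)))" by (auto simp: algebra_simps)
    finally show ?thesis .
  qed
  have "P (\<lambda>t. p t * q t) + P (\<lambda>t. p t * r t) - P (\<lambda>t. q t * r t)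
      = (\<integral>t. w t * (p t * q t) + w t * (p t * r t) - w t * (q t * r t) \<partial>M)"
    unfolding Pdef using ipq ipr iqr by simp
  also have "\<dots> = (\<integral>t. w t * (p t * p t) + w t * ((r t - p t) * (p t - q t)) \<partial>M)"
    unfolding eq ..
  also have "\<dots> = P (\<lambda>t. p t * p t) + (\<integral>t. w t * ((r t - p t) * (p t - q t)) \<partial>M)"
    unfolding Pdef using ipp ie by simp
  finally have k: "P (\<lambda>t. p t * q t) + P (\<lambda>t. p t * r t) - P (\<lambda>t. q t * r t) - P (\<lambda>t. p t * p t)
      = (\<integral>t. w t * ((r t - p t) * (p t - q t)) \<partial>M)" by simp
  have k0: "0 \<le> (\<integral>t. w t * ((r t - p t) * (p t - q t)) \<partial>M)"
    using pt by (intro integral_nonneg_AE) auto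
  have A0: "P (\<lambda>t. 1) \<ge> 0" unfolding Pdef using w0 by (intro integral_nonneg_AE) auto
  have "gT (P (\<lambda>t. 1)) P p q r - (P (\<lambda>t. 1) * P (\<lambda>t. p t * p t) - (P p)^2)
      = P (\<lambda>t. 1) * (P (\<lambda>t. p t * q t) + P (\<lambda>t. p t * r t) - P (\<lambda>t. q t * r t) - P (\<lambda>t. p t * p t))"
    unfolding gT_def by (simp add: algebra_simps power2_eq_square)
  also have "\<dots> \<ge> 0" unfolding k using A0 k0 by simp
  finally show "P (\<lambda>t. 1) * P (\<lambda>t. p t * p t) - (P p)^2 \<le> gT (P (\<lambda>t. 1)) P p q r" by simp
qed

lemma gruss_core:
  fixes M :: "'a measure" and w v u z1 z2 g1 g2 :: "'a \<Rightarrow> real" and P :: "('a \<Rightarrow> real) \<Rightarrow> real"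
  assumes w0: "\<And>t. w t \<ge> 0" and iw: "integrable M w"
    and iv: "integrable M (\<lambda>t. w t * v t)" and iu: "integrable M (\<lambda>t. w t * u t)"
    and ivu: "integrable M (\<lambda>t. w t * (v t * u t))"
    and iz1: "integrable M (\<lambda>t. w t * z1 t)" and iz2: "integrable M (\<lambda>t. w t * z2 t)"
    and ivz1: "integrable M (\<lambda>t. w t * (v t * z1 t))" and ivz2: "integrable M (\<lambda>t. w t * (v t * z2 t))"
    and iz12: "integrable M (\<lambda>t. w t * (z1 t * z2 t))"
    and ig1: "integrable M (\<lambda>t. w t * g1 t)" and ig2: "integrable M (\<lambda>t. w t * g2 t)"
    and iug1: "integrable M (\<lambda>t. w t * (u t * g1 t))" and iug2: "integrable M (\<lambda>t. w t * (u t * g2 t))"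
    and ig12: "integrable M (\<lambda>t. w t * (g1 t * g2 t))"
    and mv: "(\<lambda>t. w t * (v t * v t)) \<in> borel_measurable M"
    and mu: "(\<lambda>t. w t * (u t * u t)) \<in> borel_measurable M"
    and bv: "\<And>t. w t \<noteq> 0 \<Longrightarrow> z1 t \<le> v t \<and> v t \<le> z2 t"
    and bu: "\<And>t. w t \<noteq> 0 \<Longrightarrow> g1 t \<le> u t \<and> u t \<le> g2 t"
    and Pd: "P = (\<lambda>f. \<integral>t. w t * f t \<partial>M)"
  shows "(P (\<lambda>t. 1) * P (\<lambda>t. v t * u t) - P v * P u)^2
      \<le> gT (P (\<lambda>t. 1)) P v z1 z2 * gT (P (\<lambda>t. 1)) P u g1 g2"
proof -
  note Tv = T_ge[OF w0 iw iv iz1 iz2 ivz1 ivz2 iz12 mv bv Pd]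
  note Tu = T_ge[OF w0 iw iu ig1 ig2 iug1 iug2 ig12 mu bu Pd]
  have ivv: "integrable M (\<lambda>t. w t * (v t * v t))" by (rule Tv(1))
  have iuu: "integrable M (\<lambda>t. w t * (u t * u t))" by (rule Tu(1))
  define A where "A = P (\<lambda>t. 1)"
  define Vv where "Vv = A * P (\<lambda>t. v t * v t) - (P v)^2"
  define Vu where "Vu = A * P (\<lambda>t. u t * u t) - (P u)^2"
  define C where "C = A * P (\<lambda>t. v t * u t) - P v * P u"
  have Vv0: "Vv \<ge> 0" using var_ineq[OF w0 iw iv ivv] unfolding Vv_def A_def Pd by simp
  have Vu0: "Vu \<ge> 0" using var_ineq[OF w0 iw iu iuu] unfolding Vu_def A_def Pd by simp
  have q: "0 \<le> Vu * c^2 + 2 * C * c + Vv" for c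
  proof -
    have ih: "integrable M (\<lambda>t. w t * (v t + c * u t))"
      using iv iu by (simp add: algebra_simps)
    have e2: "(\<lambda>t. w t * ((v t + c * u t) * (v t + c * u t)))
        = (\<lambda>t. w t * (v t * v t) + 2 * c * (w t * (v t * u t)) + c^2 * (w t * (u t * u t)))"
      by (auto simp: algebra_simps power2_eq_square)
    have ihh: "integrable M (\<lambda>t. w t * ((v t + c * u t) * (v t + c * u t)))"
      unfolding e2 using ivv ivu iuu by simp
    have p1: "P (\<lambda>t. v t + c * u t) = P v + c * P u"
    proof -
      have "P (\<lambda>t. v t + c * u t) = (\<integral>t. w t * v t + c * (w t * u t) \<partial>M)"
        unfolding Pd by (simp add: algebra_simps)
      also have "\<dots> = P v + c * P u" unfolding Pd using iv iu by simp
      finally show ?thesis .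
    qed
    have p2: "P (\<lambda>t. (v t + c * u t) * (v t + c * u t))
        = P (\<lambda>t. v t * v t) + 2 * c * P (\<lambda>t. v t * u t) + c^2 * P (\<lambda>t. u t * u t)"
      unfolding Pd e2 using ivv ivu iuu by simp
    have "(P (\<lambda>t. v t + c * u t))^2 \<le> A * P (\<lambda>t. (v t + c * u t) * (v t + c * u t))"
      using var_ineq[OF w0 iw ih ihh] unfolding A_def Pd by simp
    thus ?thesis unfolding p1 p2 Vu_def Vv_def C_def
      by (simp add: algebra_simps power2_eq_square)
  qed
  have "C^2 \<le> Vu * Vv" by (rule quad_disc[OF Vu0 q])
  also have "\<dots> \<le> gT A P u g1 g2 * gT A P v z1 z2"
  proof -
    have a: "Vv \<le> gT A P v z1 z2" unfolding Vv_def A_def by (rule Tv(2))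
    have b: "Vu \<le> gT A P u g1 g2" unfolding Vu_def A_def by (rule Tu(2))
    show ?thesis using a b Vv0 Vu0 by (intro mult_mono) auto
  qed
  finally show ?thesis unfolding C_def A_def by (simp add: mult.commute)
qed
theorem theorem2:
  fixes v u z1 z2 g1 g2 :: "real \<Rightarrow> real"
    and x alpha rho beta eta k :: real
  assumes int_v: "set_integrable lborel {0..} v"
    and int_u: "set_integrable lborel {0..} u"
    and int_z1: "set_integrable lborel {0..} z1"
    and int_z2: "set_integrable lborel {0..} z2"
    and int_g1: "set_integrable lborel {0..} g1"
    and int_g2: "set_integrable lborel {0..} g2"
    and bv: "\<And>t. t \<ge> 0 \<Longrightarrow> z1 t \<le> v t \<and> v t \<le> z2 t"
    and bu: "\<And>t. t \<ge> 0 \<Longrightarrow> g1 t \<le> u t \<and> u t \<le> g2 t"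
    and x: "x > 0" and alpha: "alpha > 0" and rho: "rho > 0"
    and ex_1: "kat_exists rho alpha eta (\<lambda>t. 1) x"
    and ex_v: "kat_exists rho alpha eta v x"
    and ex_u: "kat_exists rho alpha eta u x"
    and ex_vu: "kat_exists rho alpha eta (\<lambda>t. v t * u t) x"
    and ex_z1: "kat_exists rho alpha eta z1 x"
    and ex_z2: "kat_exists rho alpha eta z2 x"
    and ex_vz1: "kat_exists rho alpha eta (\<lambda>t. v t * z1 t) x"
    and ex_vz2: "kat_exists rho alpha eta (\<lambda>t. v t * z2 t) x"
    and ex_z1z2: "kat_exists rho alpha eta (\<lambda>t. z1 t * z2 t) x"
    and ex_g1: "kat_exists rho alpha eta g1 x"
    and ex_g2: "kat_exists rho alpha eta g2 x"
    and ex_ug1: "kat_exists rho alpha eta (\<lambda>t. u t * g1 t) x"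
    and ex_ug2: "kat_exists rho alpha eta (\<lambda>t. u t * g2 t) x"
    and ex_g1g2: "kat_exists rho alpha eta (\<lambda>t. g1 t * g2 t) x"
  shows "(kat_Lambda rho alpha beta eta k x * kat_J rho alpha beta eta k (\<lambda>t. v t * u t) x
          - kat_J rho alpha beta eta k v x * kat_J rho alpha beta eta k u x)\<^sup>2
         \<le> kat_T rho alpha beta eta k x v z1 z2 * kat_T rho alpha beta eta k x u g1 g2"
proof -
  define w where "w = (\<lambda>t. indicator {0..x} t * kat_kernel rho alpha eta x t)"
  define P where "P = (\<lambda>f. \<integral>t. w t * f t \<partial>lborel)"
  define c where "c = rho powr (1 - beta) * x powr k / Gamma alpha"
  have J: "kat_J rho alpha beta eta k f x = c * P f" for f
    unfolding kat_J_def set_lebesgue_integral_def c_def P_def w_def by (simp add: mult.assoc)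
  have E: "kat_exists rho alpha eta f x \<longleftrightarrow> integrable lborel (\<lambda>t. w t * f t)" for f
    unfolding kat_exists_def set_integrable_def w_def by (simp add: mult.assoc)
  have w0: "w t \<ge> 0" for t
    unfolding w_def kat_kernel_def by (auto simp: indicator_def intro!: divide_nonneg_nonneg)
  have wS: "t \<ge> 0" if "w t \<noteq> 0" for t
    using that unfolding w_def by (auto simp: indicator_def)
  have iw: "integrable lborel w" using ex_1 unfolding E by simp
  note kv = kernel_int_value[OF x rho alpha ex_1[unfolded kat_exists_def]]
  have P1: "P (\<lambda>t. 1) = x powr (rho*(eta+alpha)) / rho * Beta (eta+1) alpha"
  proof -
    have "P (\<lambda>t. 1) = (LINT tau:{0..x}|lborel. kat_kernel rho alpha eta x tau)"
      unfolding P_def w_def set_lebesgue_integral_def by simp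
    thus ?thesis using kv(2) by simp
  qed
  have L: "kat_Lambda rho alpha beta eta k x = c * P (\<lambda>t. 1)"
  proof -
    have g: "Gamma alpha > 0" using alpha by (rule Gamma_real_pos)
    have r: "rho powr (1 - beta) = rho * rho powr (- beta)"
      using powr_add[of rho 1 "-beta"] rho by simp
    have xx: "x powr (k + rho * (eta + alpha)) = x powr k * x powr (rho * (eta + alpha))"
      by (simp add: powr_add)
    have e: "eta + 1 + alpha = eta + alpha + 1" by simp
    show ?thesis
      unfolding kat_Lambda_def P1 c_def Beta_def r xx e using g rho by (simp add: field_simps)
  qed
  have mw: "w \<in> borel_measurable lborel" using iw by (rule borel_measurable_integrable)
  have msq: "(\<lambda>t. w t * (f t * f t)) \<in> borel_measurable lborel"
    if "set_integrable lborel {0..} f" for f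
  proof -
    have m0: "(\<lambda>t. indicator {0..} t *\<^sub>R f t) \<in> borel_measurable lborel"
      using that unfolding set_integrable_def by (rule borel_measurable_integrable)
    have "(\<lambda>t. w t * (f t * f t)) = (\<lambda>t. w t * ((indicator {0..} t *\<^sub>R f t) * (indicator {0..} t *\<^sub>R f t)))"
    proof
      fix t show "w t * (f t * f t) = w t * ((indicator {0..} t *\<^sub>R f t) * (indicator {0..} t *\<^sub>R f t))"
        using wS[of t] by (cases "w t = 0") (auto simp: indicator_def)
    qed
    also have "\<dots> \<in> borel_measurable lborel" using mw m0 by measurable
    finally show ?thesis .
  qed
  have Pd: "P = (\<lambda>f. \<integral>t. w t * f t \<partial>lborel)" by (rule P_def)
  have core: "(P (\<lambda>t. 1) * P (\<lambda>t. v t * u t) - P v * P u)^2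
      \<le> gT (P (\<lambda>t. 1)) P v z1 z2 * gT (P (\<lambda>t. 1)) P u g1 g2"
    by (rule gruss_core[OF w0 iw ex_v[unfolded E] ex_u[unfolded E] ex_vu[unfolded E]
        ex_z1[unfolded E] ex_z2[unfolded E] ex_vz1[unfolded E] ex_vz2[unfolded E] ex_z1z2[unfolded E]
        ex_g1[unfolded E] ex_g2[unfolded E] ex_ug1[unfolded E] ex_ug2[unfolded E] ex_g1g2[unfolded E]
        msq[OF int_v] msq[OF int_u] _ _ Pd])
       (use bv bu wS in blast)+
  have T: "kat_T rho alpha beta eta k x p q r = c^2 * gT (P (\<lambda>t. 1)) P p q r" for p q r
    unfolding kat_T_def Let_def J L gT_def by (simp add: algebra_simps power2_eq_square)
  have lhs: "kat_Lambda rho alpha beta eta k x * kat_J rho alpha beta eta k (\<lambda>t. v t * u t) x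
          - kat_J rho alpha beta eta k v x * kat_J rho alpha beta eta k u x
        = c^2 * (P (\<lambda>t. 1) * P (\<lambda>t. v t * u t) - P v * P u)"
    unfolding J L by (simp add: algebra_simps power2_eq_square)
  have c4: "0 \<le> (c^2)^2" by simp
  show ?thesis unfolding lhs T power_mult_distrib
    using mult_left_mono[OF core c4] by (simp add: algebra_simps power2_eq_square)
qed

end
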